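(* Let $S_A>0$, $c_{\mathrm{TX}}>0$, $\phi>0$, $\theta=\phi/c_{\mathrm{TX}}$, $B\geq1$ an integer, and $0<\lambda<\lambda_{\mathrm{th}}=\left(\sqrt{1+1/S_A}+\sqrt{\theta}\right)^{-2}$. Let $$v_{\mathrm{th}}(\lambda,0)=\sqrt{\lambda\theta}+\frac{\lambda}{2}+\sqrt{\lambda}\sqrt{\sqrt{\lambda\theta}+\frac{\lambda}{4}+\frac{1}{S_A}}.$$ For $V_k\in(0,1]$, $\zeta\geq0$, $S_M\geq0$, let $\rho(\zeta)=\zeta e^{-\zeta}$, $\mathcal B_B(r;\rho)=\binom{B}{r}\rho^r(1-\rho)^{B-r}$, $\hat\nu(V,\Lambda)=V/(1+V\Lambda)$, and $$f(\zeta,S_M,V_k)=\sum_{r=0}^B\mathcal B_B(r;\rho(\zeta))\,\hat\nu\left(V_k,\frac{rS_AS_M}{S_A+S_M}\right)+\lambda\zeta B(1+\theta S_M).$$ The myopic policy $(\zeta^{(MP)}(V_k),S_M^{(MP)}(V_k))$ is a minimizer of $f(\cdot,\cdot,V_k)$ over $\zeta\geq0$, $S_M\geq0$ (with the convention $S_M=0$ when $\zeta=0$). Then: (i) if $V_k\leq v_{\mathrm{th}}(\lambda,0)$, then $(\zeta^{(MP)}(V_k),S_M^{(MP)}(V_k))=(0,0)$; (ii) otherwise, $(\zeta,S_M)=(\zeta^{(MP)}(V_k),S_M^{(MP)}(V_k))$ satisfies $\zeta\in(0,1)$, $S_M>0$, and simultaneously solves $h(S_M,\zeta,V_k)=0$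 and $g(S_M,\zeta,V_k)=0$, where, with $R\sim\mathcal B_B(\cdot;\rho(\zeta))$, $$h(S_M,\zeta,V_k)=-\mathbb E\left[\hat\nu\left(V_k,\frac{RS_AS_M}{S_A+S_M}\right)^2\frac{RS_A^2}{(S_A+S_M)^2}\right]+\lambda\zeta B\theta,$$ $$g(S_M,\zeta,V_k)=\mathbb E\left[\hat\nu\left(V_k,\frac{RS_AS_M}{S_A+S_M}\right)\frac{R-\rho(\zeta)B}{\rho(\zeta)(1-\rho(\zeta))}\right]+\lambda B\frac{e^{\zeta}}{1-\zeta}(1+\theta S_M).$$ Moreover, $$0<\zeta^{(MP)}(V_k)<\min\left\{1,2\ln\left(\frac{V_k}{\sqrt{\lambda\theta}}\right)\right\}$$ and $S_{M,\mathrm{th}}^{\min}\leq S_M^{(MP)}(V_k)\leq S_{M,\mathrm{th}}^{\max}$, where $$S_{M,\mathrm{th}}^{\min}=\frac{-\lambda\theta S_A-\lambda(1+V_kS_A)+V_k^2S_A-\sqrt{[(\lambda\theta+V_k^2)S_A-\lambda(1+V_kS_A)]^2-4\lambda\theta V_k^2S_A^2}}{2\lambda\theta(1+V_kS_A)},$$ $$S_{M,\mathrm{th}}^{\max}=\min\left\{\frac{-\lambda\theta S_A-\lambda(1+V_kS_A)+V_k^2S_A}{2\lambda\theta(1+V_kS_A)}+\frac{\sqrt{[(\lambda\theta+V_k^2)-\lambda(1/S_A+V_k)]^2-4\lambda\theta V_k^2}}{2\lambda\theta(1/S_A+V_k)},\ S_A\left(\frac{V_k}{\sqrt{\lambda\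theta}}-1\right)\right\}.$$
   Context: Decentralized sensing scheme in the large-network limit: $V_k$ is the fusion center's prior variance; each of infinitely many sensors activates with a probability such that the normalized activation probability per channel is $\zeta$, chooses one of $B$ channels uniformly (collision channel), and, if active, measures with local measurement SNR $S_M$ and ambient SNR $S_A$; the number $R$ of successful transmissions is Binomial with $B$ trials and success probability $\rho(\zeta)=\zeta e^{-\zeta}$, and the aggregate SNR is $RS_AS_M/(S_A+S_M)$. The cost term $\lambda\zeta B(1+\theta S_M)$ is the normalized expected sensing-transmission cost weighted by the Lagrange multiplier $\lambda$. *)

theory Defs
  imports Complex_Main
begin

definition rho :: "real \<Rightarrow> real" where
  "rho z = z * exp (- z)"

definition binom_B :: "nat \<Rightarrow> nat \<Rightarrow> real \<Rightarrow> real" where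
  "binom_B B r p = real (B choose r) * p ^ r * (1 - p) ^ (B - r)"

definition nu_hat :: "real \<Rightarrow> real \<Rightarrow> real" where
  "nu_hat V L = V / (1 + V * L)"

definition agg_snr :: "real \<Rightarrow> real \<Rightarrow> nat \<Rightarrow> real" where
  "agg_snr SA SM r = real r * SA * SM / (SA + SM)"

definition f_obj :: "real \<Rightarrow> real \<Rightarrow> real \<Rightarrow> nat \<Rightarrow> real \<Rightarrow> real \<Rightarrow> real \<Rightarrow> real" where
  "f_obj lam theta SA B zeta SM V =
     (\<Sum>r = 0..B. binom_B B r (rho zeta) * nu_hat V (agg_snr SA SM r))
     + lam * zeta * real B * (1 + theta * SM)"

definition h_fun :: "real \<Rightarrow> real \<Rightarrow> real \<Rightarrow> nat \<Rightarrow> real \<Rightarrow> real \<Rightarrow> real \<Rightarrow> real" where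
  "h_fun lam theta SA B SM zeta V =
     - (\<Sum>r = 0..B. binom_B B r (rho zeta) *
          ((nu_hat V (agg_snr SA SM r)) ^ 2 * (real r * SA ^ 2 / (SA + SM) ^ 2)))
     + lam * zeta * real B * theta"

definition g_fun :: "real \<Rightarrow> real \<Rightarrow> real \<Rightarrow> nat \<Rightarrow> real \<Rightarrow> real \<Rightarrow> real \<Rightarrow> real" where
  "g_fun lam theta SA B SM zeta V =
     (\<Sum>r = 0..B. binom_B B r (rho zeta) *
          (nu_hat V (agg_snr SA SM r) *
           ((real r - rho zeta * real B) / (rho zeta * (1 - rho zeta)))))
     + lam * real B * (exp zeta / (1 - zeta)) * (1 + theta * SM)"

definition lam_th :: "real \<Rightarrow> real \<Rightarrow> real" where
  "lam_th theta SA = 1 / (sqrt (1 + 1 / SA) + sqrt theta) ^ 2"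

definition v_th :: "real \<Rightarrow> real \<Rightarrow> real \<Rightarrow> real" where
  "v_th lam theta SA =
     sqrt (lam * theta) + lam / 2 + sqrt lam * sqrt (sqrt (lam * theta) + lam / 4 + 1 / SA)"

definition SM_th_min :: "real \<Rightarrow> real \<Rightarrow> real \<Rightarrow> real \<Rightarrow> real" where
  "SM_th_min lam theta SA V =
     (- lam * theta * SA - lam * (1 + V * SA) + V ^ 2 * SA
      - sqrt (((lam * theta + V ^ 2) * SA - lam * (1 + V * SA)) ^ 2
              - 4 * lam * theta * V ^ 2 * SA ^ 2))
     / (2 * lam * theta * (1 + V * SA))"

definition SM_th_max :: "real \<Rightarrow> real \<Rightarrow> real \<Rightarrow> real \<Rightarrow> real" where
  "SM_th_max lam theta SA V =
     min ((- lam * theta * SA - lam * (1 + V * SA) + V ^ 2 * SA) / (2 * lam * theta * (1 + V * SA))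
          + sqrt (((lam * theta + V ^ 2) - lam * (1 / SA + V)) ^ 2 - 4 * lam * theta * V ^ 2)
            / (2 * lam * theta * (1 / SA + V)))
         (SA * (V / sqrt (lam * theta) - 1))"

end

theory Submission
  imports Defs
begin

lemma binom_nonneg: "0 \<le> p \<Longrightarrow> p \<le> 1 \<Longrightarrow> 0 \<le> binom_B B r p"
  unfolding binom_B_def by simp

lemma binom_sum: "(\<Sum>r = 0..B. binom_B B r p) = 1"
proof -
  have "(p + (1 - p)) ^ B = (\<Sum>k\<le>B. real (B choose k) * p ^ k * (1 - p) ^ (B - k))"
    by (rule binomial_ring)
  thus ?thesis unfolding binom_B_def by (simp add: atLeast0AtMost)
qed

lemma binom_mean: "(\<Sum>r = 0..B. binom_B B r p * real r) = real B * p"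
proof (cases B)
  case 0 thus ?thesis by (simp add: binom_B_def)
next
  case (Suc n)
  have "(\<Sum>r = 0..Suc n. binom_B (Suc n) r p * real r)
      = (\<Sum>k = 0..n. binom_B (Suc n) (Suc k) p * real (Suc k))"
    by (subst sum.atLeast0_atMost_Suc_shift) simp
  also have "\<dots> = (\<Sum>k = 0..n. real (Suc n) * p * (real (n choose k) * p ^ k * (1 - p) ^ (n - k)))"
  proof (rule sum.cong[OF refl])
    fix k assume "k \<in> {0..n}"
    have e: "real (Suc k) * real (Suc n choose Suc k) = real (Suc n) * real (n choose k)"
      using Suc_times_binomial[of k n] by (metis of_nat_mult)
    have "binom_B (Suc n) (Suc k) p * real (Suc k)
        = (real (Suc k) * real (Suc n choose Suc k)) * p * p ^ k * (1 - p) ^ (n - k)"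
      unfolding binom_B_def by simp
    also have "\<dots> = real (Suc n) * p * (real (n choose k) * p ^ k * (1 - p) ^ (n - k))"
      unfolding e by simp
    finally show "binom_B (Suc n) (Suc k) p * real (Suc k) = \<dots>" .
  qed
  also have "\<dots> = real (Suc n) * p * (\<Sum>k = 0..n. binom_B n k p)"
    by (simp add: sum_distrib_left binom_B_def)
  also have "\<dots> = real (Suc n) * p" by (simp add: binom_sum)
  finally show ?thesis using Suc by simp
qed

lemma binom_zero: "binom_B B r 0 = (if r = 0 then 1 else 0)"
  unfolding binom_B_def by simp

lemma rho_zero[simp]: "rho 0 = 0" unfolding rho_def by simp

lemma f_zero: "f_obj lam theta SA B 0 s V = V"
proof -
  have "(\<Sum>r = 0..B. binom_B B r (rho 0) * nu_hat V (agg_snr SA s r))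
      = (\<Sum>r \<in> {0..B}. if r = 0 then nu_hat V (agg_snr SA s 0) else 0)"
    by (rule sum.cong) (auto simp: binom_zero)
  also have "\<dots> = V" by (simp add: nu_hat_def agg_snr_def)
  finally show ?thesis unfolding f_obj_def by simp
qed

lemma rho_pos: "z > 0 \<Longrightarrow> rho z > 0" unfolding rho_def by simp
lemma rho_lt: "z > 0 \<Longrightarrow> rho z < z" unfolding rho_def by simp
lemma rho_le: "rho z \<le> exp (-1)"
proof -
  have "z \<le> exp (z - 1)" using exp_ge_add_one_self[of "z-1"] by simp
  hence "z * exp (-z) \<le> exp (z - 1) * exp (-z)" by (simp add: mult_right_mono)
  also have "\<dots> = exp (-1)" by (simp flip: exp_add)
  finally show ?thesis unfolding rho_def .
qed
lemma rho_lt1: "rho z < 1"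
  using rho_le[of z] by (smt (verit) exp_less_one_iff)
lemma rho_nonneg: "z \<ge> 0 \<Longrightarrow> rho z \<ge> 0" unfolding rho_def by simp


lemma nu_le: "V > 0 \<Longrightarrow> L \<ge> 0 \<Longrightarrow> nu_hat V L \<le> V"
  unfolding nu_hat_def by (simp add: divide_le_eq)
lemma nu_nonneg: "V > 0 \<Longrightarrow> L \<ge> 0 \<Longrightarrow> nu_hat V L \<ge> 0"
  unfolding nu_hat_def by simp

lemma agg_nonneg: "SA > 0 \<Longrightarrow> S \<ge> 0 \<Longrightarrow> agg_snr SA S r \<ge> 0"
  unfolding agg_snr_def by simp

lemma agg_r: "agg_snr SA S r = real r * agg_snr SA S 1"
  unfolding agg_snr_def by simp

lemma concav: assumes "V > 0" "a \<ge> 0"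
  shows "V - nu_hat V (real r * a) \<le> real r * (V - nu_hat V a)"
proof (cases "r = 0")
  case True thus ?thesis by (simp add: nu_hat_def)
next
  case False
  hence r1: "real r \<ge> 1" by simp
  have p1: "1 + V * (real r * a) > 0" using assms by (simp add: add_pos_nonneg)
  have e1: "V - nu_hat V (real r * a) = V * V * real r * a / (1 + V * (real r * a))"
    using assms p1 by (simp add: nu_hat_def field_simps)
  have p2: "1 + V * a > 0" using assms by (simp add: add_pos_nonneg)
  have e2: "V - nu_hat V a = V * V * a / (1 + V * a)"
    using assms p2 by (simp add: nu_hat_def field_simps)
  have "a \<le> real r * a" using assms r1 mult_right_mono[of 1 "real r" a] by simp
  hence "1 + V * a \<le> 1 + V * (real r * a)"
    using assms by (simp add: mult_left_mono)
  hence "V * V * real r * a / (1 + V * (real r * a)) \<le> V * V * real r * a / (1 + V * a)"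
    using assms by (intro divide_left_mono) (auto simp: mult_nonneg_nonneg add_pos_nonneg)
  thus ?thesis unfolding e1 e2 by (simp add: mult_ac times_divide_eq_right)
qed

lemma key_bound:
  assumes "V > 0" "SA > 0" "S \<ge> 0" "0 \<le> p" "p \<le> 1"
  shows "V - (\<Sum>r = 0..B. binom_B B r p * nu_hat V (agg_snr SA S r))
         \<le> real B * p * (V - nu_hat V (agg_snr SA S 1))"
proof -
  let ?a = "agg_snr SA S 1"
  have a0: "?a \<ge> 0" using assms agg_nonneg by blast
  have "V - (\<Sum>r = 0..B. binom_B B r p * nu_hat V (agg_snr SA S r))
      = (\<Sum>r = 0..B. binom_B B r p) * V - (\<Sum>r = 0..B. binom_B B r p * nu_hat V (agg_snr SA S r))"
    by (simp add: binom_sum)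
  also have "\<dots> = (\<Sum>r = 0..B. binom_B B r p * (V - nu_hat V (agg_snr SA S r)))"
    by (simp add: sum_distrib_right right_diff_distrib sum_subtractf)
  also have "\<dots> \<le> (\<Sum>r = 0..B. binom_B B r p * (real r * (V - nu_hat V ?a)))"
  proof (rule sum_mono)
    fix r assume "r \<in> {0..B}"
    have "V - nu_hat V (agg_snr SA S r) \<le> real r * (V - nu_hat V ?a)"
      using concav[OF assms(1) a0, of r] by (simp add: agg_r[of SA S r])
    thus "binom_B B r p * (V - nu_hat V (agg_snr SA S r)) \<le> binom_B B r p * (real r * (V - nu_hat V ?a))"
      using binom_nonneg[OF assms(4,5)] by (rule mult_left_mono)
  qed
  also have "\<dots> = (\<Sum>r = 0..B. binom_B B r p * real r) * (V - nu_hat V ?a)"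
    by (simp add: sum_distrib_right mult.assoc)
  also have "\<dots> = real B * p * (V - nu_hat V ?a)" by (simp add: binom_mean)
  finally show ?thesis .
qed

lemma f_gt_V:
  assumes "V > 0" "SA > 0" "S \<ge> 0" "z > 0" "lam > 0" "theta > 0" "B \<ge> 1"
    and "V - nu_hat V (agg_snr SA S 1) \<le> lam * (1 + theta * S)"
  shows "f_obj lam theta SA B z S V > V"
proof -
  have p0: "0 \<le> rho z" "rho z \<le> 1" using rho_nonneg rho_lt1 assms(4) less_imp_le by auto
  have k: "V - (\<Sum>r = 0..B. binom_B B r (rho z) * nu_hat V (agg_snr SA S r))
         \<le> real B * rho z * (V - nu_hat V (agg_snr SA S 1))"
    using key_bound[OF assms(1-3) p0] .
  have "real B * rho z * (V - nu_hat V (agg_snr SA S 1)) \<le> real B * rho z * (lam * (1 + theta * S))"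
    using assms(8) p0 by (intro mult_left_mono) auto
  also have "\<dots> < real B * z * (lam * (1 + theta * S))"
    using rho_lt[OF assms(4)] assms by (intro mult_strict_right_mono mult_strict_left_mono)
      (auto intro!: mult_pos_pos add_pos_nonneg)
  finally show ?thesis using k unfolding f_obj_def by (simp add: algebra_simps)
qed


lemma nu1_formula:
  assumes "S > 0" "SA > 0" "V > 0"
  shows "V - nu_hat V (agg_snr SA S 1) = V^2 / (1/S + 1/SA + V)"
proof -
  have "1/S + 1/SA + V > 0" using assms by (simp add: add_pos_pos)
  moreover have "SA + S + V * (SA * S) > 0" using assms by (simp add: add_pos_pos)
  ultimately show ?thesis using assms
    unfolding nu_hat_def agg_snr_def by (simp add: field_simps power2_eq_square)
qed

lemma amgm:
  assumes "S > 0" "theta > 0" "c > 0"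
  shows "(sqrt theta + sqrt c)^2 \<le> (1 + theta * S) * (1/S + c)"
proof -
  define t where "t = sqrt theta * sqrt c"
  have t2: "t^2 = theta * c" using assms unfolding t_def by (simp add: power_mult_distrib)
  have e1: "(1 + theta * S) * (1/S + c) = 1/S + c + theta + t^2 * S"
    using assms t2 by (simp add: field_simps)
  have e2: "(sqrt theta + sqrt c)^2 = theta + c + 2 * t"
    using assms unfolding t_def by (simp add: power2_eq_square algebra_simps)
  have "1/S + t^2 * S - 2 * t = (1 - t * S)^2 / S"
    using assms by (simp add: field_simps power2_eq_square)
  moreover have "(1 - t * S)^2 / S \<ge> 0" using assms by simp
  ultimately show ?thesis unfolding e1 e2 by linarith
qed

lemma amgm_eq:
  assumes "theta > 0" "c > 0"
  shows "(sqrt theta + sqrt c)^2 = (1 + theta * (1 / (sqrt theta * sqrt c))) * (1/(1 / (sqrt theta * sqrt c)) + c)"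
proof -
  have st: "sqrt theta > 0" "sqrt c > 0" using assms by auto
  have "(1 + theta * (1 / (sqrt theta * sqrt c))) = 1 + sqrt theta / sqrt c"
    using st by (simp add: field_simps flip: power2_eq_square)
  moreover have "1/(1 / (sqrt theta * sqrt c)) + c = sqrt c * (sqrt theta + sqrt c)"
    using st assms by (simp add: field_simps flip: power2_eq_square)
  ultimately show ?thesis using st
    by (simp add: field_simps power2_eq_square)
qed

lemma vth_equiv:
  assumes lam: "lam > 0" and th: "theta > 0" and SA: "SA > 0" and V: "V > 0"
  shows "(V \<le> v_th lam theta SA) \<longleftrightarrow> (V \<le> sqrt lam * (sqrt theta + sqrt (1/SA + V)))"
proof -
  define s where "s = sqrt lam * sqrt theta"
  define u where "u = sqrt lam * sqrt (1/SA + V)"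
  define m where "m = s + lam / 2"
  define w where "w = sqrt lam * sqrt (sqrt (lam * theta) + lam / 4 + 1 / SA)"
  have s0: "s \<ge> 0" unfolding s_def using lam th by simp
  have u0: "u \<ge> 0" unfolding u_def using lam SA V by simp
  have w0: "w \<ge> 0" unfolding w_def using lam th SA by simp
  have sl: "sqrt (lam * theta) = s" unfolding s_def by (simp add: real_sqrt_mult)
  have vt: "v_th lam theta SA = m + w" unfolding v_th_def m_def w_def sl by simp
  have in0: "sqrt (lam * theta) + lam / 4 + 1 / SA \<ge> 0" using lam SA th by (intro add_nonneg_nonneg) auto
  have w2: "w^2 = lam * (s + lam / 4 + 1 / SA)"
    unfolding w_def using lam in0 sl by (simp add: power_mult_distrib)
  have u2: "u^2 = lam * (1/SA + V)"
    unfolding u_def using lam SA V by (simp add: power_mult_distrib)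
  have s2: "s^2 = lam * theta" unfolding s_def using lam th by (simp add: power_mult_distrib)
  have ident: "(V - m)^2 - w^2 = (V - s)^2 - u^2"
    unfolding w2 u2 m_def by (simp add: power2_eq_square algebra_simps)
  have wl: "w \<ge> lam / 2"
  proof -
    have "(lam/2)^2 \<le> w^2" unfolding w2 using lam s0 SA
      by (simp add: power2_eq_square algebra_simps)
    thus ?thesis using w0 lam power2_le_imp_le by blast
  qed
  have su: "sqrt lam * (sqrt theta + sqrt (1/SA + V)) = s + u"
    unfolding s_def u_def by (simp add: algebra_simps)
  show ?thesis unfolding vt su
  proof
    assume h: "V \<le> m + w"
    show "V \<le> s + u"
    proof (rule ccontr)
      assume "\<not> V \<le> s + u"
      hence "V - s > u" by simp
      hence "(V - s)^2 > u^2" using u0 by (simp add: power_strict_mono)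
      hence q: "(V - m)^2 > w^2" using ident by linarith
      show False
      proof (cases "V \<ge> m")
        case True
        hence "V - m \<le> w" using h by simp
        hence "(V - m)^2 \<le> w^2" using True by (simp add: power_mono)
        thus False using q by simp
      next
        case False
        hence "(m - V)^2 > w^2" using q by (simp add: power2_commute)
        hence "m - V > w" using w0 False power_less_imp_less_base[of w 2 "m - V"] by simp
        hence "V < s" using wl unfolding m_def by simp
        thus False using \<open>V - s > u\<close> u0 by simp
      qed
    qed
  next
    assume h: "V \<le> s + u"
    show "V \<le> m + w"
    proof (rule ccontr)
      assume "\<not> V \<le> m + w"
      hence a: "V - m > w" by simp
      hence "(V - m)^2 > w^2" using w0 by (simp add: power_strict_mono)
      hence q: "(V - s)^2 > u^2" using ident by linarith
      have "V - s \<ge> 0" using a w0 lam unfolding m_def by simp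
      hence "V - s > u" using q u0 by (meson power_less_imp_less_base)
      thus False using h by simp
    qed
  qed
qed

lemma sq_form: "lam > 0 \<Longrightarrow> (sqrt lam * (sqrt theta + sqrt c))^2 = lam * (sqrt theta + sqrt c)^2"
  by (simp add: power_mult_distrib)

lemma cond_le:
  assumes lam: "lam > 0" and th: "theta > 0" and SA: "SA > 0" and V: "V > 0" and S: "S \<ge> 0"
    and h: "V \<le> v_th lam theta SA"
  shows "V - nu_hat V (agg_snr SA S 1) \<le> lam * (1 + theta * S)"
proof (cases "S = 0")
  case True thus ?thesis using lam by (simp add: nu_hat_def agg_snr_def)
next
  case False
  hence S0: "S > 0" using S by simp
  define c where "c = 1/SA + V"
  have c0: "c > 0" unfolding c_def using SA V by (intro add_pos_pos) auto
  have "V \<le> sqrt lam * (sqrt theta + sqrt c)" using vth_equiv[OF lam th SA V] h c_def by simp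
  hence "V^2 \<le> (sqrt lam * (sqrt theta + sqrt c))^2" using V by (simp add: power_mono)
  also have "\<dots> = lam * (sqrt theta + sqrt c)^2" using sq_form lam by blast
  also have "\<dots> \<le> lam * ((1 + theta * S) * (1/S + c))"
    using amgm[OF S0 th c0] lam by simp
  finally have "V^2 \<le> lam * (1 + theta * S) * (1/S + c)" by simp
  moreover have "1/S + c > 0" using S0 c0 by (intro add_pos_pos) auto
  ultimately have "V^2 / (1/S + c) \<le> lam * (1 + theta * S)" by (simp add: divide_le_eq)
  thus ?thesis using nu1_formula[OF S0 SA V] c_def by (simp add: add.assoc)
qed

lemma cond_gt:
  assumes lam: "lam > 0" and th: "theta > 0" and SA: "SA > 0" and V: "V > 0"
    and h: "V > v_th lam theta SA"
  shows "\<exists>S>0. V - nu_hat V (agg_snr SA S 1) > lam * (1 + theta * S)"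
proof -
  define c where "c = 1/SA + V"
  have c0: "c > 0" unfolding c_def using SA V by (intro add_pos_pos) auto
  define S where "S = 1 / (sqrt theta * sqrt c)"
  have S0: "S > 0" unfolding S_def using th c0 by simp
  have "V > sqrt lam * (sqrt theta + sqrt c)" using vth_equiv[OF lam th SA V] h c_def by simp
  hence "V^2 > (sqrt lam * (sqrt theta + sqrt c))^2"
    using lam th c0 by (intro power_strict_mono) auto
  also have "(sqrt lam * (sqrt theta + sqrt c))^2 = lam * ((1 + theta * S) * (1/S + c))"
    using sq_form[OF lam] amgm_eq[OF th c0] S_def by simp
  finally have "V^2 > lam * (1 + theta * S) * (1/S + c)" by simp
  moreover have "1/S + c > 0" using S0 c0 by (intro add_pos_pos) auto
  ultimately have "V^2 / (1/S + c) > lam * (1 + theta * S)" by (simp add: less_divide_eq)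
  thus ?thesis using nu1_formula[OF S0 SA V] c_def S0 by (auto simp add: add.assoc)
qed


lemma rho_deriv: "DERIV rho z :> exp (-z) * (1 - z)"
  unfolding rho_def
  by (rule DERIV_cong, (rule derivative_eq_intros refl)+) (simp add: algebra_simps)

lemma pow_pred: "x \<noteq> 0 \<Longrightarrow> real n * x ^ (n - Suc 0) = real n * x ^ n / x"
  by (cases n) auto

lemma binom_deriv_p:
  assumes p: "0 < p" "p < 1" and rB: "r \<le> B"
  shows "DERIV (\<lambda>x. binom_B B r x) p :> binom_B B r p * ((real r - p * real B) / (p * (1 - p)))"
proof -
  have d1: "DERIV (\<lambda>x. x ^ r) p :> real r * p ^ (r - Suc 0)" by (rule DERIV_pow)
  have d2a: "DERIV (\<lambda>x. x ^ (B - r)) (1 - p) :> real (B - r) * (1 - p) ^ (B - r - Suc 0)"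
    by (rule DERIV_pow)
  have d2b: "DERIV (\<lambda>x. 1 - x) p :> -1"
    by (rule DERIV_cong, (rule derivative_eq_intros refl)+) simp
  have d2: "DERIV (\<lambda>x. (1 - x) ^ (B - r)) p :> real (B - r) * (1 - p) ^ (B - r - Suc 0) * (-1)"
    using DERIV_chain2[OF d2a d2b] .
  have d3: "DERIV (\<lambda>x. x ^ r * (1 - x) ^ (B - r)) p :>
      real r * p ^ (r - Suc 0) * (1 - p) ^ (B - r) + real (B - r) * (1 - p) ^ (B - r - Suc 0) * (-1) * p ^ r"
    using DERIV_mult[OF d1 d2] .
  note d4 = DERIV_cmult[OF d3, of "real (B choose r)"]
  have e1: "real r * p ^ (r - Suc 0) = real r * p ^ r / p" using p by (intro pow_pred) simp
  have e2: "real (B - r) * (1 - p) ^ (B - r - Suc 0) = real (B - r) * (1 - p) ^ (B - r) / (1 - p)"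
    using p by (intro pow_pred) simp
  have e3: "real (B - r) = real B - real r" using rB by simp
  show ?thesis
  proof (rule DERIV_cong)
    show "DERIV (\<lambda>x. binom_B B r x) p :> real (B choose r) * (real r * p ^ (r - Suc 0) * (1 - p) ^ (B - r) + real (B - r) * (1 - p) ^ (B - r - Suc 0) * (-1) * p ^ r)"
      unfolding binom_B_def using d4 by (simp add: mult.assoc)
    show "real (B choose r) * (real r * p ^ (r - Suc 0) * (1 - p) ^ (B - r) + real (B - r) * (1 - p) ^ (B - r - Suc 0) * (-1) * p ^ r)
        = binom_B B r p * ((real r - p * real B) / (p * (1 - p)))"
    proof -
      define X where "X = real (B choose r) * p ^ r * (1 - p) ^ (B - r)"
      have q: "real r / p - (real B - real r) / (1 - p) = (real r - p * real B) / (p * (1 - p))"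
        using p by (simp add: field_simps)
      have "real (B choose r) * (real r * p ^ r / p * (1 - p) ^ (B - r) + real (B - r) * (1 - p) ^ (B - r) / (1 - p) * (-1) * p ^ r)
          = X * (real r / p - (real B - real r) / (1 - p))"
        unfolding X_def e3 by (simp add: algebra_simps diff_divide_distrib)
      thus ?thesis unfolding e1 e2 q X_def binom_B_def by simp
    qed
  qed
qed

lemma binom_deriv:
  assumes z: "z > 0" and rB: "r \<le> B"
  shows "DERIV (\<lambda>x. binom_B B r (rho x)) z :>
     binom_B B r (rho z) * ((real r - rho z * real B) / (rho z * (1 - rho z))) * (exp (-z) * (1 - z))"
  using DERIV_chain2[OF binom_deriv_p[OF rho_pos[OF z] rho_lt1 rB] rho_deriv] .

lemma nu_deriv:
  assumes S: "S > 0" and SA: "SA > 0" and V: "V > 0"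
  shows "DERIV (\<lambda>s. nu_hat V (agg_snr SA s r)) S :>
     - ((nu_hat V (agg_snr SA S r))^2 * (real r * SA^2 / (SA + S)^2))"
proof -
  have p1: "SA + S > 0" using S SA by simp
  have p2: "1 + V * (real r * SA * S / (SA + S)) > 0"
    using S SA V p1 by (intro add_pos_nonneg) auto
  have p3: "SA + S + V * (real r * SA * S) > 0"
    using S SA V p1 by (intro add_pos_nonneg) auto
  define L0 where "L0 = real r * SA * S / (SA + S)"
  have L0: "1 + V * L0 > 0" using p2 unfolding L0_def .
  have dL0: "DERIV (\<lambda>s. real r * SA * s) S :> real r * SA"
    using DERIV_cmult[OF DERIV_ident, of "real r * SA"] by simp
  have dL1: "DERIV (\<lambda>s. SA + s) S :> 1"
    using DERIV_add[OF DERIV_const DERIV_ident] by simp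
  have dL: "DERIV (\<lambda>s. real r * SA * s / (SA + s)) S :>
      (real r * SA * (SA + S) - real r * SA * S * 1) / ((SA + S) * (SA + S))"
    using DERIV_divide[OF dL0 dL1] p1 by simp
  have dn0: "DERIV (\<lambda>L. 1 + V * L) L0 :> V"
    using DERIV_add[OF DERIV_const DERIV_cmult[OF DERIV_ident, of V]] by simp
  have dn: "DERIV (\<lambda>L. V / (1 + V * L)) L0 :> (0 * (1 + V * L0) - V * V) / ((1 + V * L0) * (1 + V * L0))"
    using DERIV_divide[OF DERIV_const dn0] L0 by simp
  note d = DERIV_chain2[OF dn[unfolded L0_def] dL]
  show ?thesis unfolding nu_hat_def agg_snr_def
  proof (rule DERIV_cong[OF d])
    have e: "(real r * SA * (SA + S) - real r * SA * S * 1) = real r * SA ^ 2"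
      by (simp add: algebra_simps power2_eq_square)
    show "(0 * (1 + V * (real r * SA * S / (SA + S))) - V * V) /
        ((1 + V * (real r * SA * S / (SA + S))) * (1 + V * (real r * SA * S / (SA + S)))) *
        ((real r * SA * (SA + S) - real r * SA * S * 1) / ((SA + S) * (SA + S))) =
        - ((V / (1 + V * (real r * SA * S / (SA + S)))) ^ 2 * (real r * SA ^ 2 / (SA + S) ^ 2))"
      unfolding e by (simp add: power2_eq_square)
  qed
qed


lemma f_dS:
  assumes S: "S > 0" and SA: "SA > 0" and V: "V > 0"
  shows "DERIV (\<lambda>s. f_obj lam theta SA B z s V) S :> h_fun lam theta SA B S z V"
proof -
  have d1: "DERIV (\<lambda>s. \<Sum>r = 0..B. binom_B B r (rho z) * nu_hat V (agg_snr SA s r)) S :>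
      (\<Sum>r = 0..B. binom_B B r (rho z) * (- ((nu_hat V (agg_snr SA S r))^2 * (real r * SA^2 / (SA + S)^2))))"
    by (rule DERIV_sum, rule DERIV_cmult, rule nu_deriv[OF S SA V])
  have d2: "DERIV (\<lambda>s. lam * z * real B * (1 + theta * s)) S :> lam * z * real B * theta"
    using DERIV_cmult[OF DERIV_add[OF DERIV_const DERIV_cmult[OF DERIV_ident, of theta]], of "lam * z * real B"]
    by simp
  show ?thesis unfolding f_obj_def h_fun_def
    using DERIV_add[OF d1 d2] by (simp add: sum_negf)
qed

lemma f_dz:
  assumes z: "z > 0"
  shows "DERIV (\<lambda>x. f_obj lam theta SA B x S V) z :>
     exp (-z) * (1 - z) * (\<Sum>r = 0..B. binom_B B r (rho z) *
          (nu_hat V (agg_snr SA S r) * ((real r - rho z * real B) / (rho z * (1 - rho z)))))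
     + lam * real B * (1 + theta * S)"
proof -
  have d1: "DERIV (\<lambda>x. \<Sum>r = 0..B. binom_B B r (rho x) * nu_hat V (agg_snr SA S r)) z :>
      (\<Sum>r = 0..B. binom_B B r (rho z) * ((real r - rho z * real B) / (rho z * (1 - rho z))) * (exp (-z) * (1 - z))
         * nu_hat V (agg_snr SA S r))"
    apply (rule DERIV_sum)
    apply (rule DERIV_cong, rule DERIV_mult[OF binom_deriv[OF z] DERIV_const])
    by auto
  have d2: "DERIV (\<lambda>x. lam * x * real B * (1 + theta * S)) z :> lam * real B * (1 + theta * S)"
    using DERIV_cmult[OF DERIV_ident, of "lam * real B * (1 + theta * S)"]
    by (simp add: mult_ac)
  show ?thesis unfolding f_obj_def
    using DERIV_add[OF d1 d2] by (simp add: sum_distrib_left mult_ac)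
qed

lemma sum_diff_form:
  "V - (\<Sum>r = 0..B. binom_B B r p * nu_hat V (agg_snr SA S r))
      = (\<Sum>r = 0..B. binom_B B r p * (V - nu_hat V (agg_snr SA S r)))"
proof -
  have "V - (\<Sum>r = 0..B. binom_B B r p * nu_hat V (agg_snr SA S r))
      = (\<Sum>r = 0..B. binom_B B r p) * V - (\<Sum>r = 0..B. binom_B B r p * nu_hat V (agg_snr SA S r))"
    by (simp add: binom_sum)
  also have "\<dots> = (\<Sum>r = 0..B. binom_B B r p * (V - nu_hat V (agg_snr SA S r)))"
    by (simp add: sum_distrib_right right_diff_distrib sum_subtractf)
  finally show ?thesis .
qed

lemma small_zeta:
  assumes V: "V > 0" and SA: "SA > 0" and S: "S > 0" and B: "B \<ge> 1"
    and K: "V - nu_hat V (agg_snr SA S 1) > K"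
  shows "\<exists>z>0. z < 1 \<and> f_obj lam theta SA B z S V < V - real B * z * K + lam * z * real B * (1 + theta * S)"
proof -
  define D where "D = V - nu_hat V (agg_snr SA S 1)"
  define phi where "phi = (\<lambda>z::real. exp (-z) * (1 - rho z) ^ (B - 1) * D)"
  have c: "isCont phi 0" unfolding phi_def rho_def by (intro continuous_intros)
  have p0: "phi 0 = D" unfolding phi_def by simp
  have "(phi \<longlongrightarrow> D) (at_right 0)"
    using c p0 by (metis isCont_def filterlim_at_split)
  hence ev: "eventually (\<lambda>z. phi z > K) (at_right 0)"
    using K D_def by (intro order_tendstoD(1)) auto
  have "eventually (\<lambda>z. phi z > K \<and> z \<in> {0<..<1}) (at_right (0::real))"
    using ev eventually_at_right_real[of 0 1] by (rule eventually_conj) simp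
  hence "\<exists>z. phi z > K \<and> z \<in> {0<..<1}"
    by (rule eventually_happens'[rotated]) simp
  then obtain z where z: "phi z > K" "0 < z" "z < 1" by auto
  have pz: "0 \<le> rho z" "rho z \<le> 1" using rho_nonneg rho_lt1 z by (auto intro: less_imp_le)
  have nn: "\<And>r. 0 \<le> binom_B B r (rho z) * (V - nu_hat V (agg_snr SA S r))"
    using binom_nonneg[OF pz] nu_le[OF V agg_nonneg[OF SA]] S by (simp add: less_imp_le)
  have "binom_B B 1 (rho z) * (V - nu_hat V (agg_snr SA S 1))
      \<le> (\<Sum>r = 0..B. binom_B B r (rho z) * (V - nu_hat V (agg_snr SA S r)))"
    using B by (intro member_le_sum nn) auto
  also have "\<dots> = V - (\<Sum>r = 0..B. binom_B B r (rho z) * nu_hat V (agg_snr SA S r))"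
    by (rule sum_diff_form[symmetric])
  finally have l: "binom_B B 1 (rho z) * D \<le> V - (\<Sum>r = 0..B. binom_B B r (rho z) * nu_hat V (agg_snr SA S r))"
    unfolding D_def .
  have "binom_B B 1 (rho z) * D = real B * z * phi z"
    unfolding binom_B_def phi_def rho_def using B by simp
  moreover have "real B * z * phi z > real B * z * K" using z B by simp
  ultimately show ?thesis using l z unfolding f_obj_def by (intro exI[of _ z]) auto
qed


lemma quad_bounds:
  fixes A b c x :: real
  assumes A: "A > 0" and q: "A * x^2 + b * x + c < 0"
  shows "(- b - sqrt (b^2 - 4 * A * c)) / (2 * A) \<le> x \<and> x \<le> (- b + sqrt (b^2 - 4 * A * c)) / (2 * A)"
proof -
  define y where "y = 2 * A * x + b"
  have "y^2 = 4 * A * (A * x^2 + b * x + c) + (b^2 - 4 * A * c)"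
    unfolding y_def by (simp add: power2_eq_square algebra_simps)
  also have "\<dots> < b^2 - 4 * A * c" using A q by (simp add: mult_pos_neg)
  finally have "y^2 < b^2 - 4 * A * c" .
  hence "sqrt (y^2) < sqrt (b^2 - 4 * A * c)" by (rule real_sqrt_less_mono)
  hence "\<bar>y\<bar> < sqrt (b^2 - 4 * A * c)" by simp
  hence l: "- sqrt (b^2 - 4 * A * c) < 2 * A * x + b" and r: "2 * A * x + b < sqrt (b^2 - 4 * A * c)"
    unfolding y_def by linarith+
  have "- b - sqrt (b^2 - 4 * A * c) \<le> x * (2 * A)" using l by (simp add: algebra_simps)
  hence 1: "(- b - sqrt (b^2 - 4 * A * c)) / (2 * A) \<le> x" using A by (simp add: divide_le_eq)
  have "x * (2 * A) \<le> - b + sqrt (b^2 - 4 * A * c)" using r by (simp add: algebra_simps)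
  hence 2: "x \<le> (- b + sqrt (b^2 - 4 * A * c)) / (2 * A)" using A by (simp add: le_divide_eq)
  from 1 2 show ?thesis ..
qed

lemma SM_bounds:
  assumes lam: "lam > 0" and th: "theta > 0" and SA: "SA > 0" and V: "V > 0" and S: "S > 0"
    and h: "V - nu_hat V (agg_snr SA S 1) > lam * (1 + theta * S)"
  shows "SM_th_min lam theta SA V \<le> S \<and>
    S \<le> (- lam * theta * SA - lam * (1 + V * SA) + V ^ 2 * SA) / (2 * lam * theta * (1 + V * SA))
          + sqrt (((lam * theta + V ^ 2) - lam * (1 / SA + V)) ^ 2 - 4 * lam * theta * V ^ 2)
            / (2 * lam * theta * (1 / SA + V))"
proof -
  define A where "A = lam * theta * (1 + V * SA)"
  define b where "b = lam * theta * SA + lam * (1 + V * SA) - V^2 * SA"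
  define c where "c = lam * SA"
  have A0: "A > 0" unfolding A_def using lam th SA V by (simp add: add_pos_pos)
  have X: "1/S + 1/SA + V > 0" using S SA V by (intro add_pos_pos) auto
  have "V^2 / (1/S + 1/SA + V) > lam * (1 + theta * S)" using h nu1_formula[OF S SA V] by simp
  hence "V^2 > lam * (1 + theta * S) * (1/S + 1/SA + V)" using X by (simp add: less_divide_eq)
  hence "V^2 * (S * SA) > lam * (1 + theta * S) * (1/S + 1/SA + V) * (S * SA)"
    using S SA by (simp add: mult_strict_right_mono)
  also have "lam * (1 + theta * S) * (1/S + 1/SA + V) * (S * SA) = lam * (1 + theta * S) * (SA + S + V * SA * S)"
    using S SA by (simp add: field_simps)
  finally have "A * S^2 + b * S + c < 0"
    unfolding A_def b_def c_def by (simp add: power2_eq_square algebra_simps)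
  note qb = quad_bounds[OF A0 this]
  define D where "D = b^2 - 4 * A * c"
  have D1: "((lam * theta + V ^ 2) * SA - lam * (1 + V * SA)) ^ 2 - 4 * lam * theta * V ^ 2 * SA ^ 2 = D"
    unfolding D_def A_def b_def c_def by (simp add: power2_eq_square algebra_simps)
  have D2: "((lam * theta + V ^ 2) - lam * (1 / SA + V)) ^ 2 - 4 * lam * theta * V ^ 2 = D / SA^2"
    unfolding D_def A_def b_def c_def using SA by (simp add: power2_eq_square field_simps)
  have sD2: "sqrt (D / SA^2) = sqrt D / SA" using SA by (simp add: real_sqrt_divide)
  have nb: "- lam * theta * SA - lam * (1 + V * SA) + V ^ 2 * SA = - b" unfolding b_def by simp
  have mn: "SM_th_min lam theta SA V = (- b - sqrt D) / (2 * A)"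
    unfolding SM_th_min_def D1 nb A_def by (simp add: mult.assoc)
  have mx: "(- lam * theta * SA - lam * (1 + V * SA) + V ^ 2 * SA) / (2 * lam * theta * (1 + V * SA))
          + sqrt (((lam * theta + V ^ 2) - lam * (1 / SA + V)) ^ 2 - 4 * lam * theta * V ^ 2)
            / (2 * lam * theta * (1 / SA + V)) = (- b + sqrt D) / (2 * A)"
  proof -
    have "2 * lam * theta * (1 / SA + V) = 2 * A / SA" unfolding A_def using SA by (simp add: field_simps)
    hence e: "sqrt D / SA / (2 * lam * theta * (1 / SA + V)) = sqrt D / (2 * A)" using SA A0 by simp
    have e0: "2 * lam * theta * (1 + V * SA) = 2 * A" unfolding A_def by (simp add: mult.assoc)
    show ?thesis unfolding D2 sD2 nb e e0 by (simp add: add_divide_distrib diff_divide_distrib)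
  qed
  show ?thesis unfolding mn mx using qb D_def by simp
qed


theorem theorem3:
  fixes SA cTX phi theta lam V zeta SM :: real and B :: nat
  assumes SA_pos: "SA > 0" and cTX_pos: "cTX > 0" and phi_pos: "phi > 0"
    and theta_def: "theta = phi / cTX"
    and B_ge: "B \<ge> 1"
    and lam_pos: "0 < lam" and lam_lt: "lam < lam_th theta SA"
    and V_pos: "0 < V" and V_le: "V \<le> 1"
    and feas: "zeta \<ge> 0" "SM \<ge> 0"
    and conv: "zeta = 0 \<longrightarrow> SM = 0"
    and minimizer: "\<And>z s. z \<ge> 0 \<Longrightarrow> s \<ge> 0 \<Longrightarrow>
                      f_obj lam theta SA B zeta SM V \<le> f_obj lam theta SA B z s V"
  shows "(V \<le> v_th lam theta SA \<longrightarrow> zeta = 0 \<and> SM = 0)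
       \<and> (V > v_th lam theta SA \<longrightarrow>
            0 < zeta \<and> zeta < 1 \<and> SM > 0
          \<and> h_fun lam theta SA B SM zeta V = 0
          \<and> g_fun lam theta SA B SM zeta V = 0
          \<and> zeta < min 1 (2 * ln (V / sqrt (lam * theta)))
          \<and> SM_th_min lam theta SA V \<le> SM
          \<and> SM \<le> SM_th_max lam theta SA V)"
proof -
  have th: "theta > 0" using theta_def phi_pos cTX_pos by simp
  have B0: "real B > 0" using B_ge by simp
  have fle: "f_obj lam theta SA B zeta SM V \<le> V"
    using minimizer[of 0 0] f_zero[of lam theta SA B 0 V] by simp
  have strict: "zeta > 0 \<Longrightarrow> V - nu_hat V (agg_snr SA SM 1) > lam * (1 + theta * SM)"
  proof (rule ccontr)
    assume "zeta > 0" "\<not> V - nu_hat V (agg_snr SA SM 1) > lam * (1 + theta * SM)"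
    hence "f_obj lam theta SA B zeta SM V > V"
      using f_gt_V[OF V_pos SA_pos feas(2) _ lam_pos th B_ge] by simp
    thus False using fle by simp
  qed
  have part1: "V \<le> v_th lam theta SA \<longrightarrow> zeta = 0 \<and> SM = 0"
  proof
    assume hv: "V \<le> v_th lam theta SA"
    have "zeta = 0"
    proof (rule ccontr)
      assume "zeta \<noteq> 0"
      hence "zeta > 0" using feas by simp
      thus False using strict cond_le[OF lam_pos th SA_pos V_pos feas(2) hv] by fastforce
    qed
    thus "zeta = 0 \<and> SM = 0" using conv by simp
  qed
  have part2: "V > v_th lam theta SA \<longrightarrow>
            0 < zeta \<and> zeta < 1 \<and> SM > 0
          \<and> h_fun lam theta SA B SM zeta V = 0
          \<and> g_fun lam theta SA B SM zeta V = 0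
          \<and> zeta < min 1 (2 * ln (V / sqrt (lam * theta)))
          \<and> SM_th_min lam theta SA V \<le> SM
          \<and> SM \<le> SM_th_max lam theta SA V"
  proof
    assume hv: "V > v_th lam theta SA"
    obtain S0 where S0: "S0 > 0" "V - nu_hat V (agg_snr SA S0 1) > lam * (1 + theta * S0)"
      using cond_gt[OF lam_pos th SA_pos V_pos hv] by blast
    obtain z0 where z0: "z0 > 0" "f_obj lam theta SA B z0 S0 V
        < V - real B * z0 * (lam * (1 + theta * S0)) + lam * z0 * real B * (1 + theta * S0)"
      using small_zeta[OF V_pos SA_pos S0(1) B_ge S0(2)] by blast
    have fz0: "f_obj lam theta SA B z0 S0 V < V" using z0(2) by (simp add: algebra_simps)
    have zpos: "zeta > 0"
    proof (rule ccontr)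
      assume "\<not> zeta > 0"
      hence "zeta = 0" using feas by simp
      hence "f_obj lam theta SA B zeta SM V = V" using f_zero by simp
      thus False using minimizer[of z0 S0] z0(1) S0(1) fz0 by simp
    qed
    have spos: "SM > 0"
    proof (rule ccontr)
      assume "\<not> SM > 0"
      hence "SM = 0" using feas by simp
      hence "f_obj lam theta SA B zeta SM V = V + lam * zeta * real B"
        unfolding f_obj_def by (simp add: agg_snr_def nu_hat_def binom_sum flip: sum_distrib_right)
      moreover have "lam * zeta * real B > 0" using lam_pos zpos B0 by simp
      ultimately show False using fle by simp
    qed
    have st: "V - nu_hat V (agg_snr SA SM 1) > lam * (1 + theta * SM)" using strict zpos .
    have K0: "lam * real B * (1 + theta * SM) > 0" using lam_pos B0 th spos by (simp add: add_pos_pos)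
    have locz: "\<forall>y. \<bar>zeta - y\<bar> < zeta \<longrightarrow> f_obj lam theta SA B zeta SM V \<le> f_obj lam theta SA B y SM V"
      using minimizer feas by (auto simp: abs_if split: if_splits)
    let ?A = "\<Sum>r = 0..B. binom_B B r (rho zeta) *
          (nu_hat V (agg_snr SA SM r) * ((real r - rho zeta * real B) / (rho zeta * (1 - rho zeta))))"
    have dz0: "exp (-zeta) * (1 - zeta) * ?A + lam * real B * (1 + theta * SM) = 0"
      using DERIV_local_min[OF f_dz[OF zpos] zpos locz] .
    have zne1: "zeta \<noteq> 1"
    proof
      assume "zeta = 1"
      hence "lam * real B * (1 + theta * SM) = 0" using dz0 by simp
      thus False using K0 by linarith
    qed
    have zlt1: "zeta < 1"
    proof (rule ccontr)
      assume "\<not> zeta < 1"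
      hence zg: "zeta > 1" using zne1 by simp
      have "rho 0 \<le> rho zeta" using rho_nonneg zpos by simp
      moreover have "rho zeta \<le> rho 1" using rho_le[of zeta] by (simp add: rho_def)
      moreover have "\<forall>x. 0 \<le> x \<and> x \<le> 1 \<longrightarrow> isCont rho x"
        unfolding rho_def by (auto intro!: continuous_intros)
      ultimately obtain x where x: "0 \<le> x" "x \<le> 1" "rho x = rho zeta"
        using IVT[of rho 0 "rho zeta" 1] by auto
      have "f_obj lam theta SA B x SM V = f_obj lam theta SA B zeta SM V - lam * (zeta - x) * real B * (1 + theta * SM)"
        unfolding f_obj_def x(3) by (simp add: algebra_simps)
      moreover have "lam * (zeta - x) * real B * (1 + theta * SM) > 0"
        using lam_pos B0 th spos x zg by (intro mult_pos_pos add_pos_pos) auto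
      ultimately show False using minimizer[of x SM] x feas by simp
    qed
    have rp: "exp (-zeta) * (1 - zeta) > 0" using zlt1 by simp
    have gz: "g_fun lam theta SA B SM zeta V = 0"
    proof -
      define X where "X = lam * real B * (1 + theta * SM)"
      define P where "P = exp (-zeta) * (1 - zeta)"
      have P0: "P > 0" using rp P_def by simp
      have gen: "\<And>a. P * a + X = 0 \<Longrightarrow> a = - X / P" using P0 by (simp add: field_simps)
      have "P * ?A + X = 0" using dz0 unfolding P_def X_def .
      note A = gen[OF this]
      have E: "exp zeta / (1 - zeta) = 1 / P"
        using zlt1 unfolding P_def by (simp add: exp_minus field_simps)
      have "lam * real B * (1 / P) * (1 + theta * SM) = X / P" unfolding X_def by simp
      thus ?thesis unfolding g_fun_def A E by simp
    qed
    have locs: "\<forall>y. \<bar>SM - y\<bar> < SM \<longrightarrow> f_obj lam theta SA B zeta SM V \<le> f_obj lam theta SA B zeta y V"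
      using minimizer feas by (auto simp: abs_if split: if_splits)
    have hz: "h_fun lam theta SA B SM zeta V = 0"
      using DERIV_local_min[OF f_dS[OF spos SA_pos V_pos] spos locs] .
    define a' where "a' = SA^2 / (SA + SM)^2"
    have a'0: "a' \<ge> 0" unfolding a'_def by simp
    have a'1: "a' < 1"
    proof -
      have "SA^2 < (SA + SM)^2" using SA_pos spos by (intro power_strict_mono) auto
      thus ?thesis unfolding a'_def using SA_pos spos by (simp add: divide_less_eq)
    qed
    have pz: "0 \<le> rho zeta" "rho zeta \<le> 1" using rho_nonneg rho_lt1 feas by (auto intro: less_imp_le)
    have "lam * zeta * real B * theta = (\<Sum>r = 0..B. binom_B B r (rho zeta) *
          ((nu_hat V (agg_snr SA SM r)) ^ 2 * (real r * SA ^ 2 / (SA + SM) ^ 2)))"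
      using hz unfolding h_fun_def by simp
    also have "\<dots> \<le> (\<Sum>r = 0..B. binom_B B r (rho zeta) * real r * (V^2 * a'))"
    proof (rule sum_mono)
      fix r assume "r \<in> {0..B}"
      have n0: "0 \<le> nu_hat V (agg_snr SA SM r)" "nu_hat V (agg_snr SA SM r) \<le> V"
        using nu_nonneg[OF V_pos] nu_le[OF V_pos] agg_nonneg[OF SA_pos feas(2)] by auto
      have "(nu_hat V (agg_snr SA SM r)) ^ 2 \<le> V^2" using n0 by (intro power_mono) auto
      hence "(nu_hat V (agg_snr SA SM r)) ^ 2 * (real r * a') \<le> V^2 * (real r * a')"
        using a'0 by (intro mult_right_mono) auto
      hence "(nu_hat V (agg_snr SA SM r)) ^ 2 * (real r * SA ^ 2 / (SA + SM) ^ 2) \<le> real r * (V^2 * a')"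
        unfolding a'_def by (simp add: mult_ac)
      thus "binom_B B r (rho zeta) * ((nu_hat V (agg_snr SA SM r)) ^ 2 * (real r * SA ^ 2 / (SA + SM) ^ 2))
          \<le> binom_B B r (rho zeta) * real r * (V^2 * a')"
        using mult_left_mono[OF _ binom_nonneg[OF pz]] by (metis mult.assoc)
    qed
    also have "\<dots> = real B * rho zeta * (V^2 * a')"
      by (simp add: binom_mean flip: sum_distrib_right)
    finally have "lam * zeta * real B * theta \<le> real B * (zeta * exp (-zeta)) * (V^2 * a')"
      unfolding rho_def .
    hence "(real B * zeta) * (lam * theta) \<le> (real B * zeta) * (exp (-zeta) * V^2 * a')"
      by (simp add: mult_ac)
    hence "lam * theta \<le> exp (-zeta) * V^2 * a'" using B0 zpos by simp
    hence "exp zeta * (lam * theta) \<le> exp zeta * (exp (-zeta) * V^2 * a')"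
      by (intro mult_left_mono) auto
    also have "exp zeta * (exp (-zeta) * V^2 * a') = (exp zeta * exp (-zeta)) * (V^2 * a')" by (simp add: mult_ac)
    also have "exp zeta * exp (-zeta) = 1" by (simp flip: exp_add)
    finally have lt1: "exp zeta * (lam * theta) \<le> V^2 * a'" by simp
    have lt0: "0 < lam * theta" using lam_pos th by simp
    have lt2: "V^2 * a' < V^2" using a'1 V_pos by simp
    have zln: "zeta < 2 * ln (V / sqrt (lam * theta))"
    proof -
      have "exp zeta < V^2 / (lam * theta)" using lt1 lt2 lt0 by (simp add: less_divide_eq mult.commute)
      moreover have "0 < V^2 / (lam * theta)" using lt0 V_pos by simp
      ultimately have "ln (exp zeta) < ln (V^2 / (lam * theta))"
        by (subst ln_less_cancel_iff) auto
      hence "zeta < ln (V^2 / (lam * theta))" by simp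
      moreover have "V^2 / (lam * theta) = (V / sqrt (lam * theta))^2"
        using lt0 by (simp add: power_divide)
      moreover have "ln ((V / sqrt (lam * theta))^2) = 2 * ln (V / sqrt (lam * theta))"
        by (simp add: ln_realpow)
      ultimately show ?thesis by simp
    qed
    have smax2: "SM \<le> SA * (V / sqrt (lam * theta) - 1)"
    proof -
      have "lam * theta < exp zeta * (lam * theta)" using zpos lt0 mult_strict_right_mono[of 1 "exp zeta" "lam * theta"] by simp
      hence "lam * theta < V^2 * a'" using lt1 by simp
      also have "V^2 * a' = (V * SA / (SA + SM))^2" unfolding a'_def by (simp add: power_divide power_mult_distrib)
      finally have "sqrt (lam * theta) < sqrt ((V * SA / (SA + SM))^2)"
        by (rule real_sqrt_less_mono)
      hence "sqrt (lam * theta) < V * SA / (SA + SM)"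
        using V_pos SA_pos spos by simp
      hence "sqrt (lam * theta) * (SA + SM) < V * SA" using SA_pos spos by (simp add: less_divide_eq)
      hence "SA + SM < V * SA / sqrt (lam * theta)" using lt0 by (simp add: less_divide_eq mult.commute)
      thus ?thesis by (simp add: algebra_simps)
    qed
    note sb = SM_bounds[OF lam_pos th SA_pos V_pos spos st]
    have "SM \<le> SM_th_max lam theta SA V" unfolding SM_th_max_def using sb smax2 by simp
    thus "0 < zeta \<and> zeta < 1 \<and> SM > 0
          \<and> h_fun lam theta SA B SM zeta V = 0
          \<and> g_fun lam theta SA B SM zeta V = 0
          \<and> zeta < min 1 (2 * ln (V / sqrt (lam * theta)))
          \<and> SM_th_min lam theta SA V \<le> SM
          \<and> SM \<le> SM_th_max lam theta SA V"
      using zpos zlt1 spos hz gz zln sb by simp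
  qed
  show ?thesis using part1 part2 by blast
qed

end
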